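(* Let $A$ be a unital algebra over $\mathbb{F}_2$, $(\Omega^1,{\rm d})$ a first order differential calculus on $A$, and $\theta\in\Omega^1$ any element. Let $\bar A$ be the set $A$ with product $a\,\bar\cdot\,b=ab+a+b$ and addition $a\,\bar+\,b=a+b+1$. Let $\bar\Omega^1$ be the set $\Omega^1$ with addition, bimodule structure and differential $\omega\,\bar+\,\eta=\theta+\omega+\eta$, $a\,\bar\cdot\,\omega=a\theta+(a+1)\omega$, $\omega\,\bar\cdot\,a=\theta a+\omega(a+1)$, $\bar{\rm d} a=\theta+{\rm d} a$. Then $(\bar\Omega^1,\bar{\rm d})$ is a first order differential calculus on $\bar A$. Moreover: (i) the maps $a\mapsto\bar a=1+a$ on $A$ and $\omega\mapsto\bar\omega=\theta+\omega$ on $\Omega^1$ make $\bar{\ }:A\to\bar A$ a diffeomorphism; (ii) $\theta$ is the zero element of $\bar\Omega^1$; (iii) ${\rm d} a=\theta a+a\theta$ for all $a\in A$ (i.e. $\theta$ makes $\Omega^1$ inner) if and only if $\bar{\rm d} a=a\,\bar\cdot\,0\ \bar+\ 0\,\bar\cdot\,a$ for all $a$ (i.e. the zero element $0$ of $\Omega^1$ makes $\bar\Omega^1$ inner).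
   Context: A first order differential calculus on a unital algebra $B$ over $\mathbb{F}_2$ is a $B$-bimodule $\Omega^1_B$ with a linear map ${\rm d}:B\to\Omega^1_B$ satisfying ${\rm d}(ab)=({\rm d} a)b+a{\rm d} b$ and such that $\Omega^1_B$ is spanned by elements $a{\rm d} b$. An algebra isomorphism $\phi:A\to B$ between algebras with calculi is a diffeomorphism if there is a linear map $\phi_*:\Omega^1_A\to\Omega^1_B$ with $\phi_*(a\omega)=\phi(a)\phi_*(\omega)$, $\phi_*(\omega a)=\phi_*(\omega)\phi(a)$ and $\phi_*\circ{\rm d}={\rm d}\circ\phi$. The calculus is inner by $\theta$ if ${\rm d} a=\theta a-a\theta$ for all $a$ (over $\mathbb{F}_2$, signs are irrelevant). $\bar A$ is a unital $\mathbb{F}_2$-algebra with zero $1$ and unit $0$. *)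

theory Defs
  imports "HOL-Algebra.QuotRing"
begin

definition f2_algebra :: "('a, 'm) ring_scheme \<Rightarrow> bool" where
  "f2_algebra A \<longleftrightarrow> ring A \<and> \<one>\<^bsub>A\<^esub> \<oplus>\<^bsub>A\<^esub> \<one>\<^bsub>A\<^esub> = \<zero>\<^bsub>A\<^esub>"

record ('a, 'w) calc =
  omg  :: "'w set"
  wadd :: "'w \<Rightarrow> 'w \<Rightarrow> 'w"
  lact :: "'a \<Rightarrow> 'w \<Rightarrow> 'w"
  ract :: "'w \<Rightarrow> 'a \<Rightarrow> 'w"
  dd   :: "'a \<Rightarrow> 'w"

definition is_wzero :: "('a, 'w) calc \<Rightarrow> 'w \<Rightarrow> bool" where
  "is_wzero C z \<longleftrightarrow> z \<in> omg C \<and> (\<forall>w\<in>omg C. wadd C z w = w)"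

text \<open>Omega^1 is an A-bimodule (over F_2, vector space structure = abelian group structure).\<close>
definition bimodule :: "('a, 'm) ring_scheme \<Rightarrow> ('a, 'w) calc \<Rightarrow> bool" where
  "bimodule A C \<longleftrightarrow>
     (\<forall>w\<in>omg C. \<forall>v\<in>omg C. wadd C w v \<in> omg C) \<and>
     (\<forall>a\<in>carrier A. \<forall>w\<in>omg C. lact C a w \<in> omg C \<and> ract C w a \<in> omg C) \<and>
     (\<forall>u\<in>omg C. \<forall>v\<in>omg C. \<forall>w\<in>omg C. wadd C (wadd C u v) w = wadd C u (wadd C v w)) \<and>
     (\<forall>u\<in>omg C. \<forall>v\<in>omg C. wadd C u v = wadd C v u) \<and>
     (\<exists>z. is_wzero C z \<and> (\<forall>w\<in>omg C. \<exists>v\<in>omg C. wadd C w v = z)) \<and>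
     (\<forall>a\<in>carrier A. \<forall>v\<in>omg C. \<forall>w\<in>omg C.
        lact C a (wadd C v w) = wadd C (lact C a v) (lact C a w) \<and>
        ract C (wadd C v w) a = wadd C (ract C v a) (ract C w a)) \<and>
     (\<forall>a\<in>carrier A. \<forall>b\<in>carrier A. \<forall>w\<in>omg C.
        lact C (a \<oplus>\<^bsub>A\<^esub> b) w = wadd C (lact C a w) (lact C b w) \<and>
        ract C w (a \<oplus>\<^bsub>A\<^esub> b) = wadd C (ract C w a) (ract C w b) \<and>
        lact C (a \<otimes>\<^bsub>A\<^esub> b) w = lact C a (lact C b w) \<and>
        ract C w (a \<otimes>\<^bsub>A\<^esub> b) = ract C (ract C w a) b \<and>
        lact C a (ract C w b) = ract C (lact C a w) b) \<and>
     (\<forall>w\<in>omg C. lact C \<one>\<^bsub>A\<^esub> w = w \<and> ract C w \<one>\<^bsub>A\<^esub> = w)"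

inductive_set dspan :: "('a, 'm) ring_scheme \<Rightarrow> ('a, 'w) calc \<Rightarrow> 'w set"
  for A C where
  gen: "a \<in> carrier A \<Longrightarrow> b \<in> carrier A \<Longrightarrow> lact C a (dd C b) \<in> dspan A C"
| add: "x \<in> dspan A C \<Longrightarrow> y \<in> dspan A C \<Longrightarrow> wadd C x y \<in> dspan A C"

definition fodc :: "('a, 'm) ring_scheme \<Rightarrow> ('a, 'w) calc \<Rightarrow> bool" where
  "fodc A C \<longleftrightarrow> bimodule A C \<and>
     (\<forall>a\<in>carrier A. dd C a \<in> omg C) \<and>
     (\<forall>a\<in>carrier A. \<forall>b\<in>carrier A. dd C (a \<oplus>\<^bsub>A\<^esub> b) = wadd C (dd C a) (dd C b)) \<and>
     (\<forall>a\<in>carrier A. \<forall>b\<in>carrier A.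
        dd C (a \<otimes>\<^bsub>A\<^esub> b) = wadd C (ract C (dd C a) b) (lact C a (dd C b))) \<and>
     omg C \<subseteq> dspan A C"

definition diffeo_via :: "('a, 'm) ring_scheme \<Rightarrow> ('a, 'w) calc \<Rightarrow>
    ('b, 'n) ring_scheme \<Rightarrow> ('b, 'v) calc \<Rightarrow> ('a \<Rightarrow> 'b) \<Rightarrow> ('w \<Rightarrow> 'v) \<Rightarrow> bool" where
  "diffeo_via A C B D phi phis \<longleftrightarrow>
     phi \<in> ring_iso A B \<and>
     (\<forall>w\<in>omg C. phis w \<in> omg D) \<and>
     (\<forall>w\<in>omg C. \<forall>v\<in>omg C. phis (wadd C w v) = wadd D (phis w) (phis v)) \<and>
     (\<forall>a\<in>carrier A. \<forall>w\<in>omg C. phis (lact C a w) = lact D (phi a) (phis w)) \<and>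
     (\<forall>a\<in>carrier A. \<forall>w\<in>omg C. phis (ract C w a) = ract D (phis w) (phi a)) \<and>
     (\<forall>a\<in>carrier A. phis (dd C a) = dd D (phi a))"

text \<open>The calculus is inner by theta: d a = theta a - a theta (signs irrelevant over F_2).\<close>
definition inner_by :: "('a, 'm) ring_scheme \<Rightarrow> ('a, 'w) calc \<Rightarrow> 'w \<Rightarrow> bool" where
  "inner_by A C th \<longleftrightarrow> (\<forall>a\<in>carrier A. dd C a = wadd C (ract C th a) (lact C a th))"

definition bar_alg :: "('a, 'm) ring_scheme \<Rightarrow> 'a ring" where
  "bar_alg A = \<lparr>carrier = carrier A,
     mult = (\<lambda>a b. a \<otimes>\<^bsub>A\<^esub> b \<oplus>\<^bsub>A\<^esub> a \<oplus>\<^bsub>A\<^esub> b),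
     one = \<zero>\<^bsub>A\<^esub>,
     zero = \<one>\<^bsub>A\<^esub>,
     add = (\<lambda>a b. a \<oplus>\<^bsub>A\<^esub> b \<oplus>\<^bsub>A\<^esub> \<one>\<^bsub>A\<^esub>)\<rparr>"

definition bar_calc :: "('a, 'm) ring_scheme \<Rightarrow> ('a, 'w) calc \<Rightarrow> 'w \<Rightarrow> ('a, 'w) calc" where
  "bar_calc A C th = \<lparr>omg = omg C,
     wadd = (\<lambda>w v. wadd C th (wadd C w v)),
     lact = (\<lambda>a w. wadd C (lact C a th) (lact C (a \<oplus>\<^bsub>A\<^esub> \<one>\<^bsub>A\<^esub>) w)),
     ract = (\<lambda>w a. wadd C (ract C th a) (ract C w (a \<oplus>\<^bsub>A\<^esub> \<one>\<^bsub>A\<^esub>))),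
     dd = (\<lambda>a. wadd C th (dd C a))\<rparr>"

end

theory Submission
  imports Defs
begin

locale P53 =
  fixes A :: "'a ring" and C :: "('a, 'w) calc" and th :: 'w and z :: 'w
  assumes f2: "f2_algebra A" and fo: "fodc A C" and thm_th: "th \<in> omg C"
    and zz: "is_wzero C z"
begin

lemma rA: "ring A" using f2 unfolding f2_algebra_def by auto

lemma oneone: "\<one>\<^bsub>A\<^esub> \<oplus>\<^bsub>A\<^esub> \<one>\<^bsub>A\<^esub> = \<zero>\<^bsub>A\<^esub>" using f2 unfolding f2_algebra_def by auto

lemma bm: "bimodule A C" using fo unfolding fodc_def by auto

lemma th_in[simp]: "th \<in> omg C" by (rule thm_th)
lemma z_in[simp]: "z \<in> omg C" using zz unfolding is_wzero_def by auto
lemma z_l[simp]: "w \<in> omg C \<Longrightarrow> wadd C z w = w" using zz unfolding is_wzero_def by auto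

lemma W_add[simp]: "w \<in> omg C \<Longrightarrow> v \<in> omg C \<Longrightarrow> wadd C w v \<in> omg C"
  using bm unfolding bimodule_def by auto
lemma W_lact[simp]: "a \<in> carrier A \<Longrightarrow> w \<in> omg C \<Longrightarrow> lact C a w \<in> omg C"
  using bm unfolding bimodule_def by auto
lemma W_ract[simp]: "a \<in> carrier A \<Longrightarrow> w \<in> omg C \<Longrightarrow> ract C w a \<in> omg C"
  using bm unfolding bimodule_def by auto
lemma W_dd[simp]: "a \<in> carrier A \<Longrightarrow> dd C a \<in> omg C"
  using fo unfolding fodc_def by auto

lemma w_assoc[simp]: "u \<in> omg C \<Longrightarrow> v \<in> omg C \<Longrightarrow> w \<in> omg C \<Longrightarrow>
   wadd C (wadd C u v) w = wadd C u (wadd C v w)"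
  using bm unfolding bimodule_def by auto
lemma w_comm: "u \<in> omg C \<Longrightarrow> v \<in> omg C \<Longrightarrow> wadd C u v = wadd C v u"
  using bm unfolding bimodule_def by auto
lemma w_lcomm: "u \<in> omg C \<Longrightarrow> v \<in> omg C \<Longrightarrow> w \<in> omg C \<Longrightarrow>
   wadd C u (wadd C v w) = wadd C v (wadd C u w)"
  by (metis w_assoc w_comm)
lemma z_r[simp]: "w \<in> omg C \<Longrightarrow> wadd C w z = w" by (metis w_comm z_l z_in)

lemma inv_ex: "w \<in> omg C \<Longrightarrow> \<exists>v\<in>omg C. wadd C w v = z"
proof -
  assume w: "w \<in> omg C"
  obtain z0 where z0: "is_wzero C z0" "\<forall>w\<in>omg C. \<exists>v\<in>omg C. wadd C w v = z0"
    using bm unfolding bimodule_def by blast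
  have z0i: "z0 \<in> omg C" "wadd C z0 z = z" using z0(1) z_in unfolding is_wzero_def by blast+
  have "z0 = z" using z_r[OF z0i(1)] z0i(2) by simp
  thus ?thesis using z0 w by auto
qed

lemma cancel: "u \<in> omg C \<Longrightarrow> v \<in> omg C \<Longrightarrow> w \<in> omg C \<Longrightarrow> wadd C u v = wadd C u w \<Longrightarrow> v = w"
proof -
  assume u: "u \<in> omg C" and v: "v \<in> omg C" and w: "w \<in> omg C" and e: "wadd C u v = wadd C u w"
  obtain u' where u': "u' \<in> omg C" "wadd C u u' = z" using inv_ex u by blast
  have "v = wadd C (wadd C u' u) v" using u' u v by (simp add: w_comm)
  also have "\<dots> = wadd C (wadd C u' u) w" using u' u v w e by simp
  also have "\<dots> = w" using u' u w by (simp add: w_comm)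
  finally show ?thesis .
qed

lemma lact_addA[simp]: "a \<in> carrier A \<Longrightarrow> b \<in> carrier A \<Longrightarrow> w \<in> omg C \<Longrightarrow>
  lact C (a \<oplus>\<^bsub>A\<^esub> b) w = wadd C (lact C a w) (lact C b w)"
  using bm unfolding bimodule_def by auto
lemma ract_addA[simp]: "a \<in> carrier A \<Longrightarrow> b \<in> carrier A \<Longrightarrow> w \<in> omg C \<Longrightarrow>
  ract C w (a \<oplus>\<^bsub>A\<^esub> b) = wadd C (ract C w a) (ract C w b)"
  using bm unfolding bimodule_def by auto
lemma lact_mult[simp]: "a \<in> carrier A \<Longrightarrow> b \<in> carrier A \<Longrightarrow> w \<in> omg C \<Longrightarrow>
  lact C (a \<otimes>\<^bsub>A\<^esub> b) w = lact C a (lact C b w)"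
  using bm unfolding bimodule_def by auto
lemma ract_mult[simp]: "a \<in> carrier A \<Longrightarrow> b \<in> carrier A \<Longrightarrow> w \<in> omg C \<Longrightarrow>
  ract C w (a \<otimes>\<^bsub>A\<^esub> b) = ract C (ract C w a) b"
  using bm unfolding bimodule_def by auto
lemma lact_ract[simp]: "a \<in> carrier A \<Longrightarrow> b \<in> carrier A \<Longrightarrow> w \<in> omg C \<Longrightarrow>
  lact C a (ract C w b) = ract C (lact C a w) b"
  using bm unfolding bimodule_def by auto
lemma lact_wadd[simp]: "a \<in> carrier A \<Longrightarrow> v \<in> omg C \<Longrightarrow> w \<in> omg C \<Longrightarrow>
  lact C a (wadd C v w) = wadd C (lact C a v) (lact C a w)"
  using bm unfolding bimodule_def by auto
lemma ract_wadd[simp]: "a \<in> carrier A \<Longrightarrow> v \<in> omg C \<Longrightarrow> w \<in> omg C \<Longrightarrow>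
  ract C (wadd C v w) a = wadd C (ract C v a) (ract C w a)"
  using bm unfolding bimodule_def by auto
lemma lact_one[simp]: "w \<in> omg C \<Longrightarrow> lact C \<one>\<^bsub>A\<^esub> w = w"
  using bm unfolding bimodule_def by auto
lemma ract_one[simp]: "w \<in> omg C \<Longrightarrow> ract C w \<one>\<^bsub>A\<^esub> = w"
  using bm unfolding bimodule_def by auto

lemma lact_zeroA[simp]: "w \<in> omg C \<Longrightarrow> lact C \<zero>\<^bsub>A\<^esub> w = z"
proof -
  assume w: "w \<in> omg C"
  have zc: "\<zero>\<^bsub>A\<^esub> \<in> carrier A" using ring.ring_simprules(2)[OF rA] .
  have "lact C \<zero>\<^bsub>A\<^esub> w = wadd C (lact C \<zero>\<^bsub>A\<^esub> w) (lact C \<zero>\<^bsub>A\<^esub> w)"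
    using lact_addA[OF zc zc w] ring.ring_simprules(15)[OF rA zc] by simp
  hence "wadd C (lact C \<zero>\<^bsub>A\<^esub> w) z = wadd C (lact C \<zero>\<^bsub>A\<^esub> w) (lact C \<zero>\<^bsub>A\<^esub> w)"
    using w zc by (metis z_r W_lact)
  thus ?thesis using cancel w zc by (metis W_lact z_in)
qed
lemma ract_zeroA[simp]: "w \<in> omg C \<Longrightarrow> ract C w \<zero>\<^bsub>A\<^esub> = z"
proof -
  assume w: "w \<in> omg C"
  have zc: "\<zero>\<^bsub>A\<^esub> \<in> carrier A" using ring.ring_simprules(2)[OF rA] .
  have "ract C w \<zero>\<^bsub>A\<^esub> = wadd C (ract C w \<zero>\<^bsub>A\<^esub>) (ract C w \<zero>\<^bsub>A\<^esub>)"
    using ract_addA[OF zc zc w] ring.ring_simprules(15)[OF rA zc] by simp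
  hence "wadd C (ract C w \<zero>\<^bsub>A\<^esub>) z = wadd C (ract C w \<zero>\<^bsub>A\<^esub>) (ract C w \<zero>\<^bsub>A\<^esub>)"
    using w zc by (metis z_r W_ract)
  thus ?thesis using cancel w zc by (metis W_ract z_in)
qed

lemma self[simp]: "w \<in> omg C \<Longrightarrow> wadd C w w = z"
proof -
  assume w: "w \<in> omg C"
  have oc: "\<one>\<^bsub>A\<^esub> \<in> carrier A" using ring.ring_simprules(6)[OF rA] .
  have "wadd C w w = lact C (\<one>\<^bsub>A\<^esub> \<oplus>\<^bsub>A\<^esub> \<one>\<^bsub>A\<^esub>) w" using w oc by simp
  thus ?thesis using oneone w by simp
qed
lemma self2[simp]: "w \<in> omg C \<Longrightarrow> v \<in> omg C \<Longrightarrow> wadd C w (wadd C w v) = v"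
  by (metis w_assoc self z_l)

lemma lact_z[simp]: "a \<in> carrier A \<Longrightarrow> lact C a z = z"
  by (metis lact_wadd self z_in z_l W_lact)
lemma ract_z[simp]: "a \<in> carrier A \<Longrightarrow> ract C z a = z"
  by (metis ract_wadd self z_in z_l W_ract)

lemma dd_add[simp]: "a \<in> carrier A \<Longrightarrow> b \<in> carrier A \<Longrightarrow> dd C (a \<oplus>\<^bsub>A\<^esub> b) = wadd C (dd C a) (dd C b)"
  using fo unfolding fodc_def by auto
lemma dd_mult[simp]: "a \<in> carrier A \<Longrightarrow> b \<in> carrier A \<Longrightarrow>
   dd C (a \<otimes>\<^bsub>A\<^esub> b) = wadd C (ract C (dd C a) b) (lact C a (dd C b))"
  using fo unfolding fodc_def by auto
lemma dd_one[simp]: "dd C \<one>\<^bsub>A\<^esub> = z"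
proof -
  have oc: "\<one>\<^bsub>A\<^esub> \<in> carrier A" using ring.ring_simprules(6)[OF rA] .
  have "dd C \<one>\<^bsub>A\<^esub> = dd C (\<one>\<^bsub>A\<^esub> \<otimes>\<^bsub>A\<^esub> \<one>\<^bsub>A\<^esub>)" using ring.ring_simprules(12)[OF rA oc] by simp
  also have "\<dots> = z" using oc by simp
  finally show ?thesis .
qed

lemmas wac = w_comm w_lcomm


lemma Acl[simp]: "\<zero>\<^bsub>A\<^esub> \<in> carrier A" "\<one>\<^bsub>A\<^esub> \<in> carrier A"
  "a \<in> carrier A \<Longrightarrow> b \<in> carrier A \<Longrightarrow> a \<oplus>\<^bsub>A\<^esub> b \<in> carrier A"
  "a \<in> carrier A \<Longrightarrow> b \<in> carrier A \<Longrightarrow> a \<otimes>\<^bsub>A\<^esub> b \<in> carrier A"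
  using rA by (auto simp: ring.ring_simprules)

lemmas Rs = ring.ring_simprules(7,8,10,11,12,13,15,22,23,24,25)[OF rA] monoid.r_one[OF ring.is_monoid[OF rA]]

lemma a_self[simp]: "a \<in> carrier A \<Longrightarrow> a \<oplus>\<^bsub>A\<^esub> a = \<zero>\<^bsub>A\<^esub>"
proof -
  assume a: "a \<in> carrier A"
  have "a \<oplus>\<^bsub>A\<^esub> a = a \<otimes>\<^bsub>A\<^esub> (\<one>\<^bsub>A\<^esub> \<oplus>\<^bsub>A\<^esub> \<one>\<^bsub>A\<^esub>)"
    using rA a by (simp add: Rs)
  thus ?thesis using oneone rA a by (simp add: ring.ring_simprules)
qed
lemma a_self2[simp]: "a \<in> carrier A \<Longrightarrow> b \<in> carrier A \<Longrightarrow> a \<oplus>\<^bsub>A\<^esub> (a \<oplus>\<^bsub>A\<^esub> b) = b"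
  using rA by (metis a_self ring.ring_simprules(7,8) Acl)


lemma barA_ring: "ring (bar_alg A)"
proof (rule ringI)
  show "abelian_group (bar_alg A)"
    by (rule abelian_groupI) (auto simp: bar_alg_def Rs intro!: bexI[where x=x for x])
  show "monoid (bar_alg A)"
    by (rule monoidI) (auto simp: bar_alg_def Rs)
qed (auto simp: bar_alg_def Rs)

lemma barA_f2: "f2_algebra (bar_alg A)"
  unfolding f2_algebra_def using barA_ring by (simp add: bar_alg_def Rs)


abbreviation "BA \<equiv> bar_alg A"
abbreviation "BC \<equiv> bar_calc A C th"

lemma BA_simps[simp]: "carrier BA = carrier A"
  "a \<oplus>\<^bsub>BA\<^esub> b = a \<oplus>\<^bsub>A\<^esub> b \<oplus>\<^bsub>A\<^esub> \<one>\<^bsub>A\<^esub>"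
  "a \<otimes>\<^bsub>BA\<^esub> b = a \<otimes>\<^bsub>A\<^esub> b \<oplus>\<^bsub>A\<^esub> a \<oplus>\<^bsub>A\<^esub> b"
  "\<one>\<^bsub>BA\<^esub> = \<zero>\<^bsub>A\<^esub>" "\<zero>\<^bsub>BA\<^esub> = \<one>\<^bsub>A\<^esub>"
  by (simp_all add: bar_alg_def)

lemma BC_simps[simp]: "omg BC = omg C"
  "wadd BC w v = wadd C th (wadd C w v)"
  "lact BC a w = wadd C (lact C a th) (lact C (a \<oplus>\<^bsub>A\<^esub> \<one>\<^bsub>A\<^esub>) w)"
  "ract BC w a = wadd C (ract C th a) (ract C w (a \<oplus>\<^bsub>A\<^esub> \<one>\<^bsub>A\<^esub>))"
  "dd BC a = wadd C th (dd C a)"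
  by (simp_all add: bar_calc_def)

lemma BC_zero: "is_wzero BC th"
  unfolding is_wzero_def by simp

lemma BC_bimod: "bimodule BA BC"
  unfolding bimodule_def
proof (intro conjI)
  have "\<And>w. w \<in> omg C \<Longrightarrow> wadd BC w w = th" by simp
  thus "\<exists>z. is_wzero BC z \<and> (\<forall>w\<in>omg BC. \<exists>v\<in>omg BC. wadd BC w v = z)"
    using BC_zero by (metis BC_simps(1))
qed (auto simp: Rs wac)

lemma dspan_omg: "x \<in> dspan A C \<Longrightarrow> x \<in> omg C"
  by (induction rule: dspan.induct) auto

lemma dspan_bar: "x \<in> dspan A C \<Longrightarrow> wadd C th x \<in> dspan BA BC"
proof (induction rule: dspan.induct)
  case (gen a b)
  have "lact BC (a \<oplus>\<^bsub>A\<^esub> \<one>\<^bsub>A\<^esub>) (dd BC b) \<in> dspan BA BC"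
    by (rule dspan.gen) (use gen in auto)
  moreover have "lact BC (a \<oplus>\<^bsub>A\<^esub> \<one>\<^bsub>A\<^esub>) (dd BC b) = wadd C th (lact C a (dd C b))"
    using gen by (simp add: Rs wac)
  ultimately show ?case by simp
next
  case (add x y)
  have "wadd BC (wadd C th x) (wadd C th y) \<in> dspan BA BC"
    by (rule dspan.add) (use add in auto)
  moreover have "wadd BC (wadd C th x) (wadd C th y) = wadd C th (wadd C x y)"
    using add dspan_omg by (simp add: wac)
  ultimately show ?case by simp
qed

lemma BC_fodc: "fodc BA BC"
  unfolding fodc_def
proof (intro conjI)
  show "bimodule BA BC" by (rule BC_bimod)
  show "omg BC \<subseteq> dspan BA BC"
  proof
    fix w assume w: "w \<in> omg BC"
    hence "wadd C th w \<in> dspan A C" using fo unfolding fodc_def by auto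
    hence "wadd C th (wadd C th w) \<in> dspan BA BC" by (rule dspan_bar)
    thus "w \<in> dspan BA BC" using w by simp
  qed
qed (auto simp: Rs wac)

lemma diffeo: "diffeo_via A C BA BC (\<lambda>a. \<one>\<^bsub>A\<^esub> \<oplus>\<^bsub>A\<^esub> a) (\<lambda>w. wadd C th w)"
  unfolding diffeo_via_def
proof (intro conjI)
  show "(\<lambda>a. \<one>\<^bsub>A\<^esub> \<oplus>\<^bsub>A\<^esub> a) \<in> ring_iso A BA"
  proof (rule ring_iso_memI)
    show "bij_betw (\<lambda>a. \<one>\<^bsub>A\<^esub> \<oplus>\<^bsub>A\<^esub> a) (carrier A) (carrier BA)"
      by (rule bij_betwI[where g="\<lambda>a. \<one>\<^bsub>A\<^esub> \<oplus>\<^bsub>A\<^esub> a"]) auto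
  qed (auto simp: Rs)
qed (auto simp: Rs wac)

lemma inner: "inner_by A C th \<longleftrightarrow> inner_by BA BC z"
proof -
  have e: "\<And>a. a \<in> carrier A \<Longrightarrow> wadd BC (ract BC z a) (lact BC a z)
     = wadd C th (wadd C (ract C th a) (lact C a th))" by (simp add: Rs wac)
  have c: "\<And>x y. x \<in> omg C \<Longrightarrow> y \<in> omg C \<Longrightarrow> wadd C th x = wadd C th y \<longleftrightarrow> x = y"
    using cancel th_in by blast
  show ?thesis unfolding inner_by_def using e c by simp
qed

end

theorem proposition5p3:
  fixes A :: "'a ring" and C :: "('a, 'w) calc" and th :: 'w and z :: 'w
  assumes "f2_algebra A" and "fodc A C" and "th \<in> omg C"
    and "is_wzero C z"
  shows "f2_algebra (bar_alg A) \<and> fodc (bar_alg A) (bar_calc A C th)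
    \<and> diffeo_via A C (bar_alg A) (bar_calc A C th)
        (\<lambda>a. \<one>\<^bsub>A\<^esub> \<oplus>\<^bsub>A\<^esub> a) (\<lambda>w. wadd C th w)
    \<and> is_wzero (bar_calc A C th) th
    \<and> (inner_by A C th \<longleftrightarrow> inner_by (bar_alg A) (bar_calc A C th) z)"
proof -
  interpret P: P53 A C th z using assms by unfold_locales
  show ?thesis using P.barA_f2 P.BC_fodc P.diffeo P.BC_zero P.inner by blast
qed

end
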